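(* Fix $\beta>1$ and let $(D_n)_{n\geq1}$ be a sequence of non-empty finite sets of generalised $\beta$-digits. Let $k\geq3$ be odd, and suppose that $D_n=D_k$ for every odd $n>k$ and $D_n=\{0\}$ for every other $n>1$. With $\ell_n,u_n$ the least and greatest elements of $D_n$, $\Delta_n=u_n-\ell_n$, and $\delta_n$ the largest gap between consecutive elements of $D_n$ ($\delta_n=0$ if $|D_n|=1$), the family of inequalities $$\delta_n\leq\sum_{i=1}^{\infty}\Delta_{n+i}\,\beta^{-i}\qquad(n\geq1)$$ is equivalent to the pair of inequalities $$(\beta^2-1)\,\delta_k\leq\Delta_k\qquad\text{and}\qquad(\beta^{k-1}-\beta^{k-3})\,\delta_1\leq\Delta_k.$$
   Context: A generalised $\beta$-digit is a string $c_0.c_1\ldots c_k$ of non-negative integers, with value $\sum_{i=0}^k c_i\beta^{-i}$ (an ordinary non-negative integer is a generalised digit of length 1). Least/greatest elements and gaps are taken with respect to these values. *)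

theory Defs
  imports Complex_Main
begin

text \<open>A generalised beta-digit c0.c1...ck is a non-empty list of naturals;
its value is the sum of c_i * beta^(-i).\<close>
definition gdval :: "real \<Rightarrow> nat list \<Rightarrow> real" where
  "gdval \<beta> c = (\<Sum>i<length c. real (c ! i) / \<beta> ^ i)"

definition gd_least :: "real \<Rightarrow> nat list set \<Rightarrow> real" where
  "gd_least \<beta> D = Min (gdval \<beta> ` D)"

definition gd_greatest :: "real \<Rightarrow> nat list set \<Rightarrow> real" where
  "gd_greatest \<beta> D = Max (gdval \<beta> ` D)"

definition gd_width :: "real \<Rightarrow> nat list set \<Rightarrow> real" where
  "gd_width \<beta> D = gd_greatest \<beta> D - gd_least \<beta> D"

definition gd_gaps :: "real \<Rightarrow> nat list set \<Rightarrow> real set" where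
  "gd_gaps \<beta> D = {b - a | a b. a \<in> gdval \<beta> ` D \<and> b \<in> gdval \<beta> ` D \<and> a < b \<and>
       \<not> (\<exists>c \<in> gdval \<beta> ` D. a < c \<and> c < b)}"

definition gd_maxgap :: "real \<Rightarrow> nat list set \<Rightarrow> real" where
  "gd_maxgap \<beta> D = (if gd_gaps \<beta> D = {} then 0 else Max (gd_gaps \<beta> D))"

end

theory Submission
  imports Defs
begin

lemma T_summable:
  fixes w :: "nat \<Rightarrow> real"
  assumes b: "\<beta> > 1" and h: "\<And>j. j > 1 \<Longrightarrow> 0 \<le> w j \<and> w j \<le> M" and m: "m \<ge> 1"
  shows "summable (\<lambda>i. w (m + Suc i) / \<beta> ^ Suc i)"
proof (rule summable_comparison_test)
  show "summable (\<lambda>i. M * (1/\<beta>) ^ i)"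
    using b by (intro summable_mult summable_geometric) auto
  show "\<exists>N. \<forall>n\<ge>N. norm (w (m + Suc n) / \<beta> ^ Suc n) \<le> M * (1 / \<beta>) ^ n"
  proof (intro exI allI impI)
    fix n :: nat
    have hw: "0 \<le> w (m + Suc n)" "w (m + Suc n) \<le> M" using h[of "m + Suc n"] m by auto
    have pb: "\<beta> ^ n \<le> \<beta> ^ Suc n" using b by simp
    have pos: "0 < \<beta> ^ n" using b by simp
    have "norm (w (m + Suc n) / \<beta> ^ Suc n) = w (m + Suc n) / \<beta> ^ Suc n"
      using hw b by simp
    also have "\<dots> \<le> w (m + Suc n) / \<beta> ^ n"
      using hw pb pos by (intro divide_left_mono) auto
    also have "\<dots> \<le> M / \<beta> ^ n" using hw pos by (intro divide_right_mono) auto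
    also have "\<dots> = M * (1/\<beta>) ^ n" by (simp add: power_one_over)
    finally show "norm (w (m + Suc n) / \<beta> ^ Suc n) \<le> M * (1 / \<beta>) ^ n" .
  qed
qed

lemma T_rec:
  fixes w :: "nat \<Rightarrow> real"
  assumes b: "\<beta> > 1" and h: "\<And>j. j > 1 \<Longrightarrow> 0 \<le> w j \<and> w j \<le> M" and m: "m \<ge> 1"
  shows "(\<Sum>i. w (m + Suc i) / \<beta> ^ Suc i) = (w (m+1) + (\<Sum>i. w (m + 1 + Suc i) / \<beta> ^ Suc i)) / \<beta>"
proof -
  let ?f = "\<lambda>i. w (m + Suc i) / \<beta> ^ Suc i"
  have s: "summable ?f" using T_summable[OF b h m] .
  have s2: "summable (\<lambda>i. w (m + 1 + Suc i) / \<beta> ^ Suc i)" using T_summable[OF b h, where m="m+1"] m by simp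
  have "(\<Sum>i. ?f (Suc i)) = suminf ?f - ?f 0" using suminf_split_head[OF s] .
  moreover have "(\<lambda>i. ?f (Suc i)) = (\<lambda>i. (w (m + 1 + Suc i) / \<beta> ^ Suc i) / \<beta>)"
    by (rule ext) (simp add: field_simps)
  moreover have "(\<Sum>i. (w (m + 1 + Suc i) / \<beta> ^ Suc i) / \<beta>) = (\<Sum>i. w (m + 1 + Suc i) / \<beta> ^ Suc i) / \<beta>"
    using suminf_divide[OF s2] .
  ultimately have "suminf ?f = ?f 0 + (\<Sum>i. w (m + 1 + Suc i) / \<beta> ^ Suc i) / \<beta>" by simp
  thus ?thesis by (simp add: add_divide_distrib)
qed

lemma T_nonneg:
  fixes w :: "nat \<Rightarrow> real"
  assumes b: "\<beta> > 1" and h: "\<And>j. j > 1 \<Longrightarrow> 0 \<le> w j \<and> w j \<le> M" and m: "m \<ge> 1"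
  shows "0 \<le> (\<Sum>i. w (m + Suc i) / \<beta> ^ Suc i)"
  using T_summable[OF b h m] h m b by (intro suminf_nonneg) auto

lemma width_nonneg: "finite D \<Longrightarrow> D \<noteq> {} \<Longrightarrow> 0 \<le> gd_width \<beta> D"
  unfolding gd_width_def gd_greatest_def gd_least_def
proof -
  assume "finite D" "D \<noteq> {}"
  then obtain x where "x \<in> D" by auto
  hence "Min (gdval \<beta> ` D) \<le> gdval \<beta> x" "gdval \<beta> x \<le> Max (gdval \<beta> ` D)"
    using \<open>finite D\<close> by auto
  thus "0 \<le> Max (gdval \<beta> ` D) - Min (gdval \<beta> ` D)" by simp
qed

lemma single_width: "gd_width \<beta> {[0]} = 0"
  unfolding gd_width_def gd_greatest_def gd_least_def by simp

lemma single_gap: "gd_maxgap \<beta> {[0]} = 0"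
  unfolding gd_maxgap_def gd_gaps_def by auto

theorem corollary2p3:
  fixes \<beta> :: real and D :: "nat \<Rightarrow> nat list set" and k :: nat
  assumes "\<beta> > 1"
    and "\<forall>n\<ge>1. finite (D n) \<and> D n \<noteq> {} \<and> (\<forall>c\<in>D n. c \<noteq> [])"
    and "odd k" and "k \<ge> 3"
    and "\<forall>n. n > k \<and> odd n \<longrightarrow> D n = D k"
    and "\<forall>n. n > 1 \<and> n \<noteq> k \<and> \<not> (n > k \<and> odd n) \<longrightarrow> D n = {[0]}"
  shows "(\<forall>n\<ge>1. gd_maxgap \<beta> (D n)
            \<le> (\<Sum>i. gd_width \<beta> (D (n + Suc i)) / \<beta> ^ Suc i))
         \<longleftrightarrow> ((\<beta>\<^sup>2 - 1) * gd_maxgap \<beta> (D k) \<le> gd_width \<beta> (D k)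
              \<and> (\<beta> ^ (k - 1) - \<beta> ^ (k - 3)) * gd_maxgap \<beta> (D 1) \<le> gd_width \<beta> (D k))"
proof -
  note b = assms(1)
  define w where "w m = gd_width \<beta> (D m)" for m
  define W where "W = w k"
  define T where "T m = (\<Sum>i. w (m + Suc i) / \<beta> ^ Suc i)" for m
  have W0: "0 \<le> W" unfolding W_def w_def using assms(2,4) width_nonneg by auto
  have wj: "w j = (if k \<le> j \<and> odd j then W else 0)" if "j > 1" for j
    using assms(3,5,6) that unfolding W_def w_def
    by (cases "j = k") (auto simp: single_width)
  have h: "0 \<le> w j \<and> w j \<le> W" if "j > 1" for j using wj[OF that] W0 by auto
  have rec: "T m = (w (m+1) + T (m+1)) / \<beta>" if "m \<ge> 1" for m
    unfolding T_def using T_rec[where w=w and M=W and m=m, OF b h that] by simp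
  have Tnn: "0 \<le> T m" if "m \<ge> 1" for m unfolding T_def using T_nonneg[where w=w and M=W and m=m, OF b h that] by simp
  have "1 < \<beta>\<^sup>2" by (rule one_less_power[OF b]) simp
  hence b2: "\<beta>\<^sup>2 - 1 > 0" by simp
  have per: "T (n+2) = T n" if "n \<ge> k" for n
  proof -
    have "w (n + 2 + Suc i) = w (n + Suc i)" for i
      using wj[of "n + 2 + Suc i"] wj[of "n + Suc i"] that assms(4) by auto
    thus ?thesis unfolding T_def by simp
  qed
  have Todd: "T n * (\<beta>\<^sup>2 - 1) = W" if "n \<ge> k" "odd n" for n
  proof -
    have "T n = (w (n+1) + T (n+1)) / \<beta>" using rec[of n] that assms(4) by simp
    also have "T (n+1) = (w (n+2) + T (n+2)) / \<beta>" using rec[of "n+1"] by (simp add: numeral_2_eq_2)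
    also have "w (n+1) = 0" using wj[of "n+1"] that assms(4) by auto
    also have "w (n+2) = W" using wj[of "n+2"] that assms(4) by auto
    also have "T (n+2) = T n" using per that by simp
    finally have "T n = (W + T n) / \<beta> / \<beta>" by simp
    hence "T n * (\<beta> * \<beta>) = W + T n" using b by (simp add: field_simps)
    thus ?thesis by (simp add: power2_eq_square algebra_simps)
  qed
  have Tbelow: "T (k - 1 - j) * \<beta> ^ j = T (k - 1)" if "j \<le> k - 2" for j
    using that
  proof (induction j)
    case 0 then show ?case by simp
  next
    case (Suc j)
    have e: "k - 1 - Suc j + 1 = k - 1 - j" "k - 1 - Suc j \<ge> 1" using Suc.prems by auto
    have "T (k - 1 - Suc j) = (w (k - 1 - j) + T (k - 1 - j)) / \<beta>"
      using rec[OF e(2)] unfolding e(1) .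
    also have "w (k - 1 - j) = 0" using wj[of "k - 1 - j"] Suc.prems assms(4) by auto
    finally have X: "T (k - 1 - Suc j) * \<beta> = T (k - 1 - j)" using b by simp
    have "T (k - 1 - Suc j) * \<beta> ^ Suc j = (T (k - 1 - Suc j) * \<beta>) * \<beta> ^ j"
      by (simp add: algebra_simps)
    also have "\<dots> = T (k - 1 - j) * \<beta> ^ j" using X by simp
    also have "\<dots> = T (k - 1)" using Suc.IH Suc.prems by simp
    finally show ?case .
  qed
  have Tkm1: "T (k - 1) = (W + T k) / \<beta>"
    using rec[of "k-1"] assms(4) W_def by simp
  have Tk: "T k = W / (\<beta>\<^sup>2 - 1)" using Todd[of k] assms(3) b2 by (simp add: field_simps)
  have T1: "T 1 * \<beta> ^ (k - 2) = W * \<beta> / (\<beta>\<^sup>2 - 1)"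
  proof -
    have e: "k - 1 - (k - 2) = 1" using assms(4) by simp
    have "T 1 * \<beta> ^ (k - 2) = T (k - 1)" using Tbelow[of "k - 2"] unfolding e by simp
    also have "\<dots> = (W + W / (\<beta>\<^sup>2 - 1)) / \<beta>" using Tkm1 Tk by simp
    also have "W + W / (\<beta>\<^sup>2 - 1) = W * \<beta>\<^sup>2 / (\<beta>\<^sup>2 - 1)"
      using b2 by (simp add: field_simps)
    also have "W * \<beta>\<^sup>2 / (\<beta>\<^sup>2 - 1) / \<beta> = W * \<beta> / (\<beta>\<^sup>2 - 1)"
      using b by (simp add: power2_eq_square)
    finally show ?thesis .
  qed
  have c1: "gd_maxgap \<beta> (D n) \<le> T n \<longleftrightarrow> (\<beta>\<^sup>2 - 1) * gd_maxgap \<beta> (D k) \<le> W"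
    if "n \<ge> k" "odd n" for n
  proof -
    have "D n = D k" using assms(5) that by (cases "n = k") auto
    moreover have "T n = W / (\<beta>\<^sup>2 - 1)" using Todd[OF that] b2 by (simp add: field_simps)
    moreover have "gd_maxgap \<beta> (D k) \<le> W / (\<beta>\<^sup>2 - 1) \<longleftrightarrow> (\<beta>\<^sup>2 - 1) * gd_maxgap \<beta> (D k) \<le> W"
      using b2 by (simp add: pos_le_divide_eq mult.commute)
    ultimately show ?thesis by simp
  qed
  have c2: "gd_maxgap \<beta> (D 1) \<le> T 1 \<longleftrightarrow> (\<beta> ^ (k - 1) - \<beta> ^ (k - 3)) * gd_maxgap \<beta> (D 1) \<le> W"
  proof -
    have e: "\<beta> ^ (k - 1) - \<beta> ^ (k - 3) = (\<beta>\<^sup>2 - 1) * \<beta> ^ (k - 2) / \<beta>"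
    proof -
      have "k - 1 = Suc (Suc (k - 3))" "k - 2 = Suc (k - 3)" using assms(4) by auto
      thus ?thesis using b by (simp add: power2_eq_square field_simps)
    qed
    have pk: "\<beta> ^ (k - 2) > 0" using b by simp
    have "gd_maxgap \<beta> (D 1) \<le> T 1 \<longleftrightarrow> gd_maxgap \<beta> (D 1) * \<beta> ^ (k - 2) \<le> T 1 * \<beta> ^ (k - 2)"
      using pk by simp
    also have "\<dots> \<longleftrightarrow> gd_maxgap \<beta> (D 1) * \<beta> ^ (k - 2) \<le> W * \<beta> / (\<beta>\<^sup>2 - 1)" using T1 by simp
    also have "\<dots> \<longleftrightarrow> (\<beta>\<^sup>2 - 1) * \<beta> ^ (k - 2) / \<beta> * gd_maxgap \<beta> (D 1) \<le> W"
      using b b2 by (simp add: field_simps)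
    finally show ?thesis using e by simp
  qed
  have other: "gd_maxgap \<beta> (D n) \<le> T n" if "n > 1" "\<not> (n \<ge> k \<and> odd n)" for n
  proof -
    have "n \<noteq> k" using that assms(3) by auto
    hence "D n = {[0]}" using assms(6) that by (meson less_imp_le)
    thus ?thesis using Tnn[of n] that by (simp add: single_gap)
  qed
  have "(\<forall>n\<ge>1. gd_maxgap \<beta> (D n) \<le> T n) \<longleftrightarrow>
        ((\<beta>\<^sup>2 - 1) * gd_maxgap \<beta> (D k) \<le> W \<and> (\<beta> ^ (k - 1) - \<beta> ^ (k - 3)) * gd_maxgap \<beta> (D 1) \<le> W)"
  proof
    assume A: "\<forall>n\<ge>1. gd_maxgap \<beta> (D n) \<le> T n"
    show "(\<beta>\<^sup>2 - 1) * gd_maxgap \<beta> (D k) \<le> W \<and> (\<beta> ^ (k - 1) - \<beta> ^ (k - 3)) * gd_maxgap \<beta> (D 1) \<le> W"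
      using A c1[of k] c2 assms(3,4) by auto
  next
    assume B: "(\<beta>\<^sup>2 - 1) * gd_maxgap \<beta> (D k) \<le> W \<and> (\<beta> ^ (k - 1) - \<beta> ^ (k - 3)) * gd_maxgap \<beta> (D 1) \<le> W"
    show "\<forall>n\<ge>1. gd_maxgap \<beta> (D n) \<le> T n"
    proof (intro allI impI)
      fix n :: nat assume "n \<ge> 1"
      show "gd_maxgap \<beta> (D n) \<le> T n"
      proof (cases "n = 1")
        case True thus ?thesis using c2 B by simp
      next
        case False
        show ?thesis
        proof (cases "n \<ge> k \<and> odd n")
          case True thus ?thesis using c1 B by auto
        next
          case nf: False thus ?thesis using other[of n] False \<open>n \<ge> 1\<close> by auto
        qed
      qed
    qed
  qed
  thus ?thesis unfolding T_def w_def W_def .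
qed

end
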